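(* Let $N\ge 2$, $1\le K\le N-1$, $Z>0$ and $\delta>0$. Let $$U(x)=\sum_{j=1}^N-\frac{Z}{|x_j|}+\sum_{j\neq k}\frac{1}{|x_j-x_k|}.$$ Then for every $x\in\Omega$: - if $|x|_{N-K}>\delta|x|_{N-K+1}$, then $$U(x)\ge U_{N-K-1}(x)-\frac{Z}{\delta|x|_{N-K+1}}-\sum_{j=N-K+1}^N\frac{Z}{|x|_j};$$ - if $|x|_{N-K}<\delta|x|_{N-K+1}$, then $$U(x)\ge U_{N-K}(x)+\sum_{j=N-K+1}^N\Big(\frac{N-K}{1+\delta}-Z\Big)\frac{1}{|x|_j}.$$
   Context: For $x=(x_1,\dots,x_N)\in\mathbb R^{3N}$ with $x_j\in\mathbb R^3$, $|x|_k$ denotes the $k$-th smallest of $|x_1|,\dots,|x_N|$, counted with multiplicity, so that $|x|_1\le\dots\le|x|_N$. Let $\Omega=\{x\in\mathbb R^{3N}: |x|_1<|x|_2<\dots<|x|_N\}$. On $\Omega$, let $\tilde x_j$ denote the unique coordinate $x_i$ with $|x_i|=|x|_j$. For $0\le M\le N$, $$U_M(x)=\sum_{j=1}^M-\frac{Z}{|x|_j}+\sum_{j\neq k,\ j,k\le M}\frac{1}{|\tilde x_j-\tilde x_k|},$$ with $U_0=0$. This is the potential of the $M$ innermost electrons. *)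

theory Defs
  imports "HOL-Analysis.Analysis"
begin

text \<open>A configuration x = (x_1,...,x_N) in R^{3N} is a function
  x :: nat => real^3, where only x 0, ..., x (N-1) are relevant
  (coordinate x_j of the paper is x (j-1)).\<close>

definition rnorm :: "nat \<Rightarrow> (nat \<Rightarrow> real^3) \<Rightarrow> nat \<Rightarrow> real" where
  "rnorm N x k = sort (map (\<lambda>i. norm (x i)) [0..<N]) ! (k - 1)"

definition Omega :: "nat \<Rightarrow> (nat \<Rightarrow> real^3) set" where
  "Omega N = {x. \<forall>k. 1 \<le> k \<and> k < N \<longrightarrow> rnorm N x k < rnorm N x (Suc k)}"

text \<open>The coordinate x_i whose norm equals |x|_j (unique on Omega).\<close>
definition xt :: "nat \<Rightarrow> (nat \<Rightarrow> real^3) \<Rightarrow> nat \<Rightarrow> real^3" where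
  "xt N x j = (THE y. \<exists>i<N. y = x i \<and> norm (x i) = rnorm N x j)"

definition UM :: "nat \<Rightarrow> real \<Rightarrow> nat \<Rightarrow> (nat \<Rightarrow> real^3) \<Rightarrow> real" where
  "UM N Z M x = (\<Sum>j=1..M. - Z / rnorm N x j)
     + (\<Sum>j=1..M. \<Sum>k=1..M. if j \<noteq> k then 1 / norm (xt N x j - xt N x k) else 0)"

definition U :: "nat \<Rightarrow> real \<Rightarrow> (nat \<Rightarrow> real^3) \<Rightarrow> real" where
  "U N Z x = (\<Sum>j<N. - Z / norm (x j))
     + (\<Sum>j<N. \<Sum>k<N. if j \<noteq> k then 1 / norm (x j - x k) else 0)"

end

theory Submission
  imports Defs
begin

lemma rnorm_step_mono:
  assumes "x \<in> Omega N" "1 \<le> a" "b \<le> N"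
  shows "a < b \<Longrightarrow> rnorm N x a < rnorm N x b"
  using assms(3)
proof (induction b)
  case 0 then show ?case by simp
next
  case (Suc b)
  have s: "rnorm N x b < rnorm N x (Suc b)"
    using assms(1,2) Suc.prems by (auto simp: Omega_def)
  show ?case
  proof (cases "a = b")
    case True then show ?thesis using s by simp
  next
    case False then have "a < b" using Suc.prems by simp
    then show ?thesis using Suc.IH Suc.prems s by simp
  qed
qed

lemma rnorm_in:
  assumes "1 \<le> j" "j \<le> N"
  shows "\<exists>i<N. norm (x i) = rnorm N x j"
proof -
  let ?s = "sort (map (\<lambda>i. norm (x i)) [0..<N])"
  have "?s ! (j-1) \<in> set ?s" using assms by (intro nth_mem) simp
  then show ?thesis unfolding rnorm_def by auto
qed

lemma rnorm_nonneg:
  assumes "1 \<le> j" "j \<le> N"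
  shows "rnorm N x j \<ge> 0"
  using rnorm_in[OF assms, of x] by (metis norm_ge_zero)

lemma norm_inj:
  assumes "x \<in> Omega N" "i < N" "i' < N" "norm (x i) = norm (x i')"
  shows "i = i'"
proof -
  let ?l = "map (\<lambda>i. norm (x i)) [0..<N]"
  have "distinct (sort ?l)"
  proof (subst distinct_conv_nth, intro allI impI)
    fix a b assume h: "a < length (sort ?l)" "b < length (sort ?l)" "a \<noteq> b"
    then have "rnorm N x (Suc a) \<noteq> rnorm N x (Suc b)"
      using rnorm_step_mono[OF assms(1), of "Suc a" "Suc b"]
            rnorm_step_mono[OF assms(1), of "Suc b" "Suc a"]
      by (cases "a < b") auto
    then show "sort ?l ! a \<noteq> sort ?l ! b" unfolding rnorm_def by simp
  qed
  then have "distinct ?l" by simp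
  then have "inj_on (\<lambda>i. norm (x i)) {0..<N}" by (simp add: distinct_map)
  then show ?thesis using assms by (auto dest: inj_onD)
qed

lemma split4:
  fixes F :: "nat \<Rightarrow> nat \<Rightarrow> real"
  assumes "M \<le> N"
  shows "(\<Sum>j=1..N. \<Sum>k=1..N. F j k) =
     (\<Sum>j=1..M. \<Sum>k=1..M. F j k) + (\<Sum>j=1..M. \<Sum>k=Suc M..N. F j k)
   + (\<Sum>j=Suc M..N. \<Sum>k=1..M. F j k) + (\<Sum>j=Suc M..N. \<Sum>k=Suc M..N. F j k)"
proof -
  have S: "{1..N} = {1..M} \<union> {Suc M..N}" using assms by auto
  have D: "{1..M} \<inter> {Suc M..N} = {}" by auto
  have in1: "\<And>j. (\<Sum>k=1..N. F j k) = (\<Sum>k=1..M. F j k) + (\<Sum>k=Suc M..N. F j k)"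
    by (subst S, rule sum.union_disjoint) (use D in auto)
  have "(\<Sum>j=1..N. \<Sum>k=1..N. F j k) = (\<Sum>j=1..M. \<Sum>k=1..N. F j k) + (\<Sum>j=Suc M..N. \<Sum>k=1..N. F j k)"
    by (subst (1) S, rule sum.union_disjoint) (use D in auto)
  then show ?thesis unfolding in1 sum.distrib by simp
qed

theorem lemma3:
  fixes N K :: nat and Z \<delta> :: real and x :: "nat \<Rightarrow> real^3"
  assumes "N \<ge> 2" and "1 \<le> K" and "K \<le> N - 1" and "Z > 0" and "\<delta> > 0"
    and "x \<in> Omega N"
  shows "(rnorm N x (N - K) > \<delta> * rnorm N x (N - K + 1) \<longrightarrow>
            U N Z x \<ge> UM N Z (N - K - 1) x - Z / (\<delta> * rnorm N x (N - K + 1))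
                       - (\<Sum>j=N-K+1..N. Z / rnorm N x j))
       \<and> (rnorm N x (N - K) < \<delta> * rnorm N x (N - K + 1) \<longrightarrow>
            U N Z x \<ge> UM N Z (N - K)  x
                       + (\<Sum>j=N-K+1..N. (real (N - K) / (1 + \<delta>) - Z) * (1 / rnorm N x j)))"
proof -
  define r where "r = rnorm N x"
  define \<sigma> where "\<sigma> j = (THE i. i < N \<and> norm (x i) = r j)" for j
  have mono: "\<And>a b. 1 \<le> a \<Longrightarrow> a < b \<Longrightarrow> b \<le> N \<Longrightarrow> r a < r b"
    unfolding r_def using rnorm_step_mono[OF assms(6)] by blast
  have sig: "\<sigma> j < N \<and> norm (x (\<sigma> j)) = r j" if jj: "1 \<le> j" "j \<le> N" for j
  proof -
    obtain i where i: "i < N" "norm (x i) = r j" using rnorm_in[OF jj] r_def by blast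
    have "\<sigma> j = i" unfolding \<sigma>_def
      by (rule the_equality) (use i norm_inj[OF assms(6)] in auto)
    then show ?thesis using i by simp
  qed
  have xt: "xt N x j = x (\<sigma> j)" if "1 \<le> j" "j \<le> N" for j
    unfolding xt_def
  proof (rule the_equality)
    show "\<exists>i<N. x (\<sigma> j) = x i \<and> norm (x i) = rnorm N x j" using sig[OF that] r_def by auto
    fix y assume "\<exists>i<N. y = x i \<and> norm (x i) = rnorm N x j"
    then obtain i where "i < N" "y = x i" "norm (x i) = r j" using r_def by auto
    then show "y = x (\<sigma> j)" using sig[OF that] norm_inj[OF assms(6)] by metis
  qed
  have rinj: "a = b" if "1 \<le> a" "a \<le> N" "1 \<le> b" "b \<le> N" "r a = r b" for a b
    using mono[of a b] mono[of b a] that by (cases "a < b"; cases "b < a") auto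
  have inj: "inj_on \<sigma> {1..N}"
    by (rule inj_onI) (metis atLeastAtMost_iff sig rinj)
  have img: "\<sigma> ` {1..N} = {0..<N}"
  proof (rule card_subset_eq)
    show "\<sigma> ` {1..N} \<subseteq> {0..<N}" using sig by auto
    show "card (\<sigma> ` {1..N}) = card {0..<N}" using card_image[OF inj] by simp
  qed simp
  have reidx: "(\<Sum>i<N. g i) = (\<Sum>j=1..N. g (\<sigma> j))" for g :: "nat \<Rightarrow> real"
    using sum.reindex[OF inj, of g] img by (simp add: lessThan_atLeast0)
  define F where "F j k = (if j \<noteq> k then 1 / norm (xt N x j - xt N x k) else 0)" for j k
  have Fnn: "F j k \<ge> 0" for j k by (simp add: F_def)
  have Ueq: "U N Z x = (\<Sum>j=1..N. - Z / r j) + (\<Sum>j=1..N. \<Sum>k=1..N. F j k)"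
  proof -
    have "U N Z x = (\<Sum>j=1..N. - Z / norm (x (\<sigma> j))) + (\<Sum>j=1..N. \<Sum>k=1..N.
        if \<sigma> j \<noteq> \<sigma> k then 1 / norm (x (\<sigma> j) - x (\<sigma> k)) else 0)"
      unfolding U_def by (simp add: reidx)
    also have "\<dots> = (\<Sum>j=1..N. - Z / r j) + (\<Sum>j=1..N. \<Sum>k=1..N. F j k)"
    proof (intro arg_cong2[where f="(+)"] sum.cong refl)
      fix j assume "j \<in> {1..N}" then show "- Z / norm (x (\<sigma> j)) = - Z / r j" using sig by auto
    next
      fix j k assume "j \<in> {1..N}" "k \<in> {1..N}"
      then show "(if \<sigma> j \<noteq> \<sigma> k then 1 / norm (x (\<sigma> j) - x (\<sigma> k)) else 0) = F j k"
        unfolding F_def using xt inj_onD[OF inj] by auto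
    qed
    finally show ?thesis .
  qed
  have UMeq: "UM N Z M x = (\<Sum>j=1..M. - Z / r j) + (\<Sum>j=1..M. \<Sum>k=1..M. F j k)" for M
    unfolding UM_def F_def r_def by simp
  define M where "M = N - K"
  have M: "1 \<le> M" "M < N" "N - K + 1 = Suc M" using assms M_def by auto
  have rpos: "r j > 0" if "2 \<le> j" "j \<le> N" for j
    using mono[of 1 j] rnorm_nonneg[of 1 N x] that r_def by auto
  have part1: "rnorm N x (N - K) > \<delta> * rnorm N x (N - K + 1) \<longrightarrow>
            U N Z x \<ge> UM N Z (N - K - 1) x - Z / (\<delta> * rnorm N x (N - K + 1))
                       - (\<Sum>j=N-K+1..N. Z / rnorm N x j)"
  proof
    assume h: "rnorm N x (N - K) > \<delta> * rnorm N x (N - K + 1)"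
    have h': "r M > \<delta> * r (Suc M)" using h M unfolding M_def r_def by simp
    have p: "\<delta> * r (Suc M) > 0" using rpos[of "Suc M"] M assms(5) by simp
    have "Z / r M \<le> Z / (\<delta> * r (Suc M))"
      using h' p assms(4) by (intro divide_left_mono) auto
    have sp: "(\<Sum>j=1..N. g j) = (\<Sum>j=1..M - 1. g j) + g M + (\<Sum>j=Suc M..N. g j)" for g :: "nat \<Rightarrow> real"
    proof -
      have e: "{1..N} = {1..M-1} \<union> {M..N}" using M by auto
      have "(\<Sum>j=1..N. g j) = (\<Sum>j=1..M-1. g j) + (\<Sum>j=M..N. g j)"
        unfolding e by (rule sum.union_disjoint) auto
      also have "(\<Sum>j=M..N. g j) = g M + (\<Sum>j=Suc M..N. g j)"
        using M by (intro sum.atLeast_Suc_atMost) simp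
      finally show ?thesis by simp
    qed
    show "U N Z x \<ge> UM N Z (N - K - 1) x - Z / (\<delta> * rnorm N x (N - K + 1))
                       - (\<Sum>j=N-K+1..N. Z / rnorm N x j)"
    proof -
      note s4 = split4[of "M-1" N F]
      have nn: "0 \<le> (\<Sum>j=1..M-1. \<Sum>k=Suc (M-1)..N. F j k) + (\<Sum>j=Suc (M-1)..N. \<Sum>k=1..M-1. F j k)
              + (\<Sum>j=Suc (M-1)..N. \<Sum>k=Suc (M-1)..N. F j k)"
        by (intro add_nonneg_nonneg sum_nonneg Fnn)
      have "(\<Sum>j=Suc M..N. - Z / r j) = - (\<Sum>j=Suc M..N. Z / r j)"
        by (simp add: sum_negf[symmetric])
      then show ?thesis
        using Ueq UMeq[of "M-1"] s4 nn M sp[of "\<lambda>j. - Z / r j"] \<open>Z / r M \<le> _\<close>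
        unfolding M_def r_def by simp
    qed
  qed
  have part2: "rnorm N x (N - K) < \<delta> * rnorm N x (N - K + 1) \<longrightarrow>
            U N Z x \<ge> UM N Z (N - K) x
                       + (\<Sum>j=N-K+1..N. (real (N - K) / (1 + \<delta>) - Z) * (1 / rnorm N x j))"
  proof
    assume h: "rnorm N x (N - K) < \<delta> * rnorm N x (N - K + 1)"
    have h': "r M < \<delta> * r (Suc M)" using h M unfolding M_def r_def by simp
    have lb: "(\<Sum>k=1..M. F j k) \<ge> real M / (1 + \<delta>) * (1 / r j)" if j: "j \<in> {Suc M..N}" for j
    proof -
      have rj: "r j > 0" using rpos[of j] j M by auto
      have rle: "r (Suc M) \<le> r j" using mono[of "Suc M" j] j by (cases "j = Suc M") auto
      have each: "F j k \<ge> 1 / ((1 + \<delta>) * r j)" if k: "k \<in> {1..M}" for k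
      proof -
        have rk: "r k \<le> r M" using mono[of k M] k M by (cases "k = M") auto
        have rkj: "r k \<noteq> r j" using rinj[of k j] k j M by auto
        have nk: "norm (xt N x k) = r k" and nj: "norm (xt N x j) = r j"
          using xt sig k j M by auto
        have "norm (xt N x j - xt N x k) \<le> r j + r k"
          using norm_triangle_ineq4[of "xt N x j" "xt N x k"] nk nj by simp
        also have "\<dots> \<le> (1 + \<delta>) * r j"
        proof -
          have "\<delta> * r (Suc M) \<le> \<delta> * r j" using mult_left_mono[OF rle, of \<delta>] assms(5) by simp
          then show ?thesis using rk h' by (simp add: algebra_simps)
        qed
        finally have le: "norm (xt N x j - xt N x k) \<le> (1 + \<delta>) * r j" .
        have pos: "norm (xt N x j - xt N x k) > 0" using rkj nk nj by auto
        have "j \<noteq> k" using j k by auto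
        then have "F j k = 1 / norm (xt N x j - xt N x k)" by (simp add: F_def)
        then show ?thesis using le pos by (simp add: frac_le)
      qed
      have "(\<Sum>k=1..M. F j k) \<ge> (\<Sum>k=1..M. 1 / ((1 + \<delta>) * r j))"
        by (rule sum_mono) (use each in auto)
      then show ?thesis by simp
    qed
    have "(\<Sum>j=Suc M..N. \<Sum>k=1..M. F j k) \<ge> (\<Sum>j=Suc M..N. real M / (1 + \<delta>) * (1 / r j))"
      by (rule sum_mono) (use lb in auto)
    moreover note s4 = split4[of M N F]
    moreover have nn: "0 \<le> (\<Sum>j=1..M. \<Sum>k=Suc M..N. F j k) + (\<Sum>j=Suc M..N. \<Sum>k=Suc M..N. F j k)"
      by (intro add_nonneg_nonneg sum_nonneg Fnn)
    moreover have sp: "(\<Sum>j=1..N. g j) = (\<Sum>j=1..M. g j) + (\<Sum>j=Suc M..N. g j)" for g :: "nat \<Rightarrow> real"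
    proof -
      have e: "{1..N} = {1..M} \<union> {Suc M..N}" using M by auto
      show ?thesis unfolding e by (rule sum.union_disjoint) auto
    qed
    moreover have "(\<Sum>j=Suc M..N. (real M / (1 + \<delta>) - Z) * (1 / r j)) =
        (\<Sum>j=Suc M..N. real M / (1 + \<delta>) * (1 / r j)) + (\<Sum>j=Suc M..N. - Z / r j)"
      by (simp add: sum.distrib[symmetric] algebra_simps)
    ultimately show "U N Z x \<ge> UM N Z (N - K) x
                       + (\<Sum>j=N-K+1..N. (real (N - K) / (1 + \<delta>) - Z) * (1 / rnorm N x j))"
      using Ueq UMeq[of M] M unfolding M_def r_def by (simp add: M_def)
  qed
  show ?thesis using part1 part2 by blast
qed

end
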